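(* Let $n\ge 1$ and let $U\in\mathbb{C}^{n\times n}$ be unitary. Write $U=A+iB$ with $A,B\in\mathbb{R}^{n\times n}$, and define the real matrix \[ M=\begin{bmatrix} A & -B\\ B & A\end{bmatrix}\in\mathbb{R}^{2n\times 2n}. \] Let $M=Z\Sigma Z^{-1}$ be an eigendecomposition of $M$, where $Z\in\mathbb{C}^{2n\times 2n}$ is invertible and $\Sigma\in\mathbb{C}^{2n\times 2n}$ is diagonal. For each eigenvalue $\mu\in\sigma(M)$, let $Z_\mu\in\mathbb{C}^{2n\times m_M(\mu)}$ be the matrix formed by those columns of $Z$ whose corresponding diagonal entry of $\Sigma$ equals $\mu$. Let $L=[\,I_n\quad iI_n\,]\in\mathbb{C}^{n\times 2n}$, so that $L\begin{bmatrix}z^{(1)}\\ z^{(2)}\end{bmatrix}=z^{(1)}+iz^{(2)}$ for $z^{(1)},z^{(2)}\in\mathbb{C}^n$, and define $X_\mu:=LZ_\mu\in\mathbb{C}^{n\times m_M(\mu)}$. Then $\operatorname{rank}(X_\mu)=m_U(\mu)$, and whenever $m_U(\mu)>0$, the column space of $X_\mu$ equals the eigenspace $\ker(U-\mu I_n)$ of $U$ associated with $\mu$.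
   Context: $\sigma(\cdot)$ denotes the spectrum (set of eigenvalues) of a matrix. Since $M$ and $U$ are normal, algebraic and geometric multiplicities coincide; $m_M(\mu)$ and $m_U(\mu)$ denote the multiplicity of $\mu$ as an eigenvalue of $M$ and of $U$ respectively, with the convention $m_U(\mu)=0$ if $\mu\notin\sigma(U)$. *)

theory Defs
  imports "Jordan_Normal_Form.Jordan_Normal_Form" "Jordan_Normal_Form.Schur_Decomposition"
    "Jordan_Normal_Form.DL_Rank" "Jordan_Normal_Form.Matrix_Kernel"
begin

definition unitary_mat :: "complex mat \<Rightarrow> nat \<Rightarrow> bool" where
  "unitary_mat U n \<longleftrightarrow> U \<in> carrier_mat n n \<and>
     mat_adjoint U * U = 1\<^sub>m n \<and> U * mat_adjoint U = 1\<^sub>m n"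

definition realify :: "complex mat \<Rightarrow> real mat" where
  "realify U = (let A = map_mat Re U; B = map_mat Im U in four_block_mat A (- B) B A)"

definition Lmat :: "nat \<Rightarrow> complex mat" where
  "Lmat n = four_block_mat (1\<^sub>m n) (\<i> \<cdot>\<^sub>m 1\<^sub>m n) (0\<^sub>m 0 n) (0\<^sub>m 0 n)"

definition eig_idx :: "complex mat \<Rightarrow> complex \<Rightarrow> nat list" where
  "eig_idx D mu = filter (\<lambda>j. D $$ (j, j) = mu) [0..<dim_row D]"

definition Zsub :: "complex mat \<Rightarrow> complex mat \<Rightarrow> complex \<Rightarrow> complex mat" where
  "Zsub Z D mu = mat (dim_row Z) (length (eig_idx D mu))
     (\<lambda>(i, k). Z $$ (i, eig_idx D mu ! k))"

(* multiplicity of mu as an eigenvalue (algebraic = geometric for normal matrices);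
   it is 0 when mu is not an eigenvalue *)
definition eig_mult :: "complex mat \<Rightarrow> complex \<Rightarrow> nat" where
  "eig_mult U mu = Polynomial.order mu (char_poly U)"

end

theory Submission
  imports Defs "Jordan_Normal_Form.Jordan_Normal_Form_Existence" "Jordan_Normal_Form.Jordan_Normal_Form_Uniqueness"
begin

lemma sl1: "sum_list (map (\<lambda>_. Suc 0) xs) = length xs"
  by (induct xs) auto

lemma jordan_diag: "jordan_matrix (map (\<lambda>a. (1::nat, a)) as) =
  mat (length as) (length as) (\<lambda>(i,j). if i = j then as ! i else (0::'a::{zero,one}))"
proof (induct as)
  case Nil
  show ?case by (auto simp: jordan_matrix_def intro!: eq_matI)
next
  case (Cons a as)
  have sl: "sum_list (map fst (map (\<lambda>a. (1::nat, a)) as)) = length as"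
    by (induct as) auto
  have "jordan_matrix (map (\<lambda>a. (1::nat, a)) (a # as)) = four_block_mat (jordan_block 1 a)
     (0\<^sub>m 1 (length as)) (0\<^sub>m (length as) 1) (jordan_matrix (map (\<lambda>a. (1::nat, a)) as))"
    using jordan_matrix_Cons[of 1 a "map (\<lambda>a. (1::nat, a)) as"] unfolding sl by simp
  also have "\<dots> = mat (length (a # as)) (length (a # as)) (\<lambda>(i,j). if i = j then (a # as) ! i else 0)"
    unfolding Cons by (rule eq_matI) (auto simp: nth_Cons')
  finally show ?case .
qed

lemma cp_block: assumes A: "(A :: 'a :: idom mat) \<in> carrier_mat n n" and D: "D \<in> carrier_mat m m"
  shows "char_poly (four_block_mat A (0\<^sub>m n m) (0\<^sub>m m n) D) = char_poly A * char_poly D"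
proof -
  have "char_poly_matrix (four_block_mat A (0\<^sub>m n m) (0\<^sub>m m n) D) =
    four_block_mat (char_poly_matrix A) (0\<^sub>m n m) (0\<^sub>m m n) (char_poly_matrix D)"
    using A D by (auto simp: char_poly_matrix_def intro!: eq_matI)
  then show ?thesis unfolding char_poly_def
    by (simp add: det_four_block_mat_upper_right_zero[OF char_poly_matrix_closed[OF A] refl _ char_poly_matrix_closed[OF D]])
qed

lemma smv: fixes A :: "'a :: comm_ring_1 mat"
  shows "A \<in> carrier_mat nr nc \<Longrightarrow> v \<in> carrier_vec nc \<Longrightarrow> (c \<cdot>\<^sub>m A) *\<^sub>v v = c \<cdot>\<^sub>v (A *\<^sub>v v)"
  by (rule eq_vecI) (auto simp: scalar_prod_def sum_distrib_left ac_simps)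

lemma rank_kernel: fixes X K :: "'a :: field mat"
  assumes "vec_space.col_space n X = mat_kernel K" "K \<in> carrier_mat n n"
  shows "vec_space.rank n X = kernel.dim n K"
proof -
  interpret kernel n n K by (unfold_locales, rule assms(2))
  show ?thesis unfolding vec_space.rank_def using assms(1) unfolding vec_space.col_space_def
    by simp
qed

lemma geo_le_alg: assumes A: "(A :: complex mat) \<in> carrier_mat n n"
  shows "dim_gen_eigenspace A e 1 \<le> Polynomial.order e (char_poly A)"
proof -
  from char_poly_factorized[OF A] obtain as where "char_poly A = (\<Prod> a \<leftarrow> as. [:- a, 1:])" by auto
  from jordan_nf_exists[OF A this] obtain n_as where j: "jordan_nf A n_as" by auto
  have "\<And>xs::(nat \<times> complex) list. sum_list (map (min (Suc 0) \<circ> fst) xs) \<le> sum_list (map fst xs)"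
    by (induct_tac xs, auto)
  then show ?thesis unfolding dim_gen_eigenspace[OF j] jordan_nf_order[OF j]
    by (simp add: case_prod_unfold)
qed

lemma blocks:
  fixes U :: "complex mat"
  assumes U: "U \<in> carrier_mat n n"
  defines "I \<equiv> (1\<^sub>m n :: complex mat)"
  defines "T \<equiv> four_block_mat I (\<i> \<cdot>\<^sub>m I) I ((-\<i>) \<cdot>\<^sub>m I)"
  defines "Ti \<equiv> four_block_mat ((1/2) \<cdot>\<^sub>m I) ((1/2) \<cdot>\<^sub>m I) ((-\<i>/2) \<cdot>\<^sub>m I) ((\<i>/2) \<cdot>\<^sub>m I)"
  defines "Mc \<equiv> map_mat complex_of_real (realify U)"
  defines "D \<equiv> four_block_mat U (0\<^sub>m n n) (0\<^sub>m n n) (map_mat cnj U)"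
  shows "T * Ti = 1\<^sub>m (n+n)" "Ti * T = 1\<^sub>m (n+n)" "T * Mc = D * T"
    "Lmat n * Mc = U * Lmat n" "Lmat n * Ti = four_block_mat I (0\<^sub>m n n) (0\<^sub>m 0 n) (0\<^sub>m 0 n)"
    "Mc \<in> carrier_mat (n+n) (n+n)"
proof -
  define A' where "A' = map_mat (\<lambda>z. complex_of_real (Re z)) U"
  define B' where "B' = map_mat (\<lambda>z. complex_of_real (Im z)) U"
  have A': "A' \<in> carrier_mat n n" and B': "B' \<in> carrier_mat n n" using U by (auto simp: A'_def B'_def)
  have I: "I \<in> carrier_mat n n" by (simp add: I_def)
  have Mc: "Mc = four_block_mat A' (- B') B' A'"
    using U by (auto simp: Mc_def realify_def A'_def B'_def Let_def intro!: eq_matI)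
  show "Mc \<in> carrier_mat (n+n) (n+n)" unfolding Mc using A' B' by auto
  show "T * Ti = 1\<^sub>m (n+n)" unfolding T_def Ti_def
    by (subst mult_four_block_mat[where ?nr1.0=n and ?n1.0=n and ?n2.0=n and ?nr2.0=n and ?nc1.0=n and ?nc2.0=n], auto simp: I_def intro!: eq_matI)
  show "Ti * T = 1\<^sub>m (n+n)" unfolding T_def Ti_def
    by (subst mult_four_block_mat[where ?nr1.0=n and ?n1.0=n and ?n2.0=n and ?nr2.0=n and ?nc1.0=n and ?nc2.0=n], auto simp: I_def intro!: eq_matI)
  have U1: "U $$ (i,j) = complex_of_real (Re (U $$ (i,j))) + \<i> * complex_of_real (Im (U $$ (i,j)))" for i j
    by (simp add: complex_eq_iff)
  have sm1: "(c \<cdot>\<^sub>m 1\<^sub>m n) * X = c \<cdot>\<^sub>m X" if "X \<in> carrier_mat n m" for c and X :: "complex mat" and m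
    using that by (subst mult_smult_assoc_mat[where A="1\<^sub>m n" and B=X], auto)
  have sm2: "X * (c \<cdot>\<^sub>m 1\<^sub>m n) = c \<cdot>\<^sub>m X" if "X \<in> carrier_mat m n" for c and X :: "complex mat" and m
    using that by (subst mult_smult_distrib[where A=X and B="1\<^sub>m n"], auto)
  have Uc: "map_mat cnj U \<in> carrier_mat n n" using U by auto
  show "T * Mc = D * T" unfolding T_def Mc D_def I_def
    apply (subst mult_four_block_mat[where ?nr1.0=n and ?n1.0=n and ?n2.0=n and ?nr2.0=n and ?nc1.0=n and ?nc2.0=n], insert A' B' U, auto)
    apply (subst mult_four_block_mat[where ?nr1.0=n and ?n1.0=n and ?n2.0=n and ?nr2.0=n and ?nc1.0=n and ?nc2.0=n], insert A' B' U, auto)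
    apply (simp add: sm1[OF A'] sm1[OF B'] sm2[OF U] sm2[OF Uc] A' B' U Uc)
    apply (rule eq_matI)
    apply (auto simp: A'_def B'_def complex_eq_iff)
    done
  have U4: "U = four_block_mat U (0\<^sub>m n 0) (0\<^sub>m 0 n) (0\<^sub>m 0 0)"
    using U by (auto intro!: eq_matI)
  have "U * Lmat n = four_block_mat U (0\<^sub>m n 0) (0\<^sub>m 0 n) (0\<^sub>m 0 0) * Lmat n"
    using U4 by simp
  also have "\<dots> = four_block_mat U (\<i> \<cdot>\<^sub>m U) (0\<^sub>m 0 n) (0\<^sub>m 0 n)" unfolding Lmat_def
    apply (subst mult_four_block_mat[where ?nr1.0=n and ?n1.0=n and ?n2.0=0 and ?nr2.0=0 and ?nc1.0=n and ?nc2.0=n], insert U, auto)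
    done
  finally have UL: "U * Lmat n = four_block_mat U (\<i> \<cdot>\<^sub>m U) (0\<^sub>m 0 n) (0\<^sub>m 0 n)" .
  show "Lmat n * Mc = U * Lmat n" unfolding UL unfolding Mc Lmat_def
    apply (subst mult_four_block_mat[where ?nr1.0=n and ?n1.0=n and ?n2.0=n and ?nr2.0=0 and ?nc1.0=n and ?nc2.0=n], insert A' B' U, auto)
    apply (simp add: sm1[OF A'] sm1[OF B'] A' B')
    apply (rule eq_matI)
    apply (auto simp: A'_def B'_def complex_eq_iff)
    done
  show "Lmat n * Ti = four_block_mat I (0\<^sub>m n n) (0\<^sub>m 0 n) (0\<^sub>m 0 n)" unfolding Lmat_def Ti_def I_def
    apply (subst mult_four_block_mat[where ?nr1.0=n and ?n1.0=n and ?n2.0=n and ?nr2.0=0 and ?nc1.0=n and ?nc2.0=n], auto)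
    done
qed

theorem lemma2p2:
  fixes n :: nat and U Z Zinv S :: "complex mat" and mu :: complex
  assumes "n \<ge> 1"
    and "unitary_mat U n"
    and "Z \<in> carrier_mat (2 * n) (2 * n)" and "Zinv \<in> carrier_mat (2 * n) (2 * n)"
    and "Z * Zinv = 1\<^sub>m (2 * n)" and "Zinv * Z = 1\<^sub>m (2 * n)"
    and "S \<in> carrier_mat (2 * n) (2 * n)" and "diagonal_mat S"
    and "map_mat complex_of_real (realify U) = Z * S * Zinv"
    and "eigenvalue (map_mat complex_of_real (realify U)) mu"
  shows "vec_space.rank n (Lmat n * Zsub Z S mu) = eig_mult U mu
     \<and> (eig_mult U mu > 0 \<longrightarrow>
          vec_space.col_space n (Lmat n * Zsub Z S mu) = mat_kernel (U - mu \<cdot>\<^sub>m 1\<^sub>m n))"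
  proof -
  have U: "U \<in> carrier_mat n n" using assms(2) unfolding unitary_mat_def by auto
  define N where "N = n + n"
  have N2: "2 * n = N" unfolding N_def by simp
  have Z: "Z \<in> carrier_mat N N" and Zi: "Zinv \<in> carrier_mat N N" and S: "S \<in> carrier_mat N N"
    using assms(3,4,7) unfolding N2 by auto
  have ZZi: "Z * Zinv = 1\<^sub>m N" and ZiZ: "Zinv * Z = 1\<^sub>m N" using assms(5,6) unfolding N2 by auto
  define I where "I = (1\<^sub>m n :: complex mat)"
  define T where "T = four_block_mat I (\<i> \<cdot>\<^sub>m I) I ((-\<i>) \<cdot>\<^sub>m I)"
  define Ti where "Ti = four_block_mat ((1/2) \<cdot>\<^sub>m I) ((1/2) \<cdot>\<^sub>m I) ((-\<i>/2) \<cdot>\<^sub>m I) ((\<i>/2) \<cdot>\<^sub>m I)"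
  define Mc where "Mc = map_mat complex_of_real (realify U)"
  define Uc where "Uc = map_mat cnj U"
  define D where "D = four_block_mat U (0\<^sub>m n n) (0\<^sub>m n n) Uc"
  have TTi: "T * Ti = 1\<^sub>m N" using blocks(1)[OF U] unfolding T_def Ti_def I_def N_def .
  have TiT: "Ti * T = 1\<^sub>m N" using blocks(2)[OF U] unfolding T_def Ti_def I_def N_def .
  have TM: "T * Mc = D * T" using blocks(3)[OF U] unfolding T_def Mc_def D_def I_def Uc_def .
  have LM: "Lmat n * Mc = U * Lmat n" using blocks(4)[OF U] unfolding Mc_def .
  have LTi: "Lmat n * Ti = four_block_mat I (0\<^sub>m n n) (0\<^sub>m 0 n) (0\<^sub>m 0 n)"
    using blocks(5)[OF U] unfolding Ti_def I_def .
  have Mc: "Mc \<in> carrier_mat N N" using blocks(6)[OF U] unfolding Mc_def N_def .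
  have Uc: "Uc \<in> carrier_mat n n" using U unfolding Uc_def by auto
  have I: "I \<in> carrier_mat n n" unfolding I_def by simp
  have T: "T \<in> carrier_mat N N" unfolding T_def N_def using I by auto
  have Ti: "Ti \<in> carrier_mat N N" unfolding Ti_def N_def using I by auto
  have D: "D \<in> carrier_mat N N" unfolding D_def N_def using U Uc by auto
  have L: "Lmat n \<in> carrier_mat n N" unfolding Lmat_def N_def by auto
  have MZ: "Mc = Z * S * Zinv" using assms(9) unfolding Mc_def .
  have ZS: "Z * S \<in> carrier_mat N N" using Z S by simp
  have DTM: "D = T * Mc * Ti"
  proof -
    have "D = D * (T * Ti)" using D TTi by simp
    also have "\<dots> = (D * T) * Ti" by (rule assoc_mult_mat[OF D T Ti, symmetric])
    also have "\<dots> = T * Mc * Ti" unfolding TM ..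
    finally show ?thesis .
  qed
  have McD: "Mc = Ti * D * T"
  proof -
    have "Ti * D * T = Ti * (D * T)" by (rule assoc_mult_mat[OF Ti D T])
    also have "\<dots> = Ti * (T * Mc)" unfolding TM ..
    also have "\<dots> = (Ti * T) * Mc" by (rule assoc_mult_mat[OF Ti T Mc, symmetric])
    also have "\<dots> = Mc" using TiT Mc by simp
    finally show ?thesis by simp
  qed
  have McZ: "Mc * Z = Z * S"
  proof -
    have "Mc * Z = (Z * S) * (Zinv * Z)" unfolding MZ by (rule assoc_mult_mat[OF ZS Zi Z])
    also have "\<dots> = Z * S" using ZiZ right_mult_one_mat[OF ZS] by simp
    finally show ?thesis .
  qed
  have SMc: "S = Zinv * Mc * Z"
  proof -
    have "Zinv * Mc * Z = Zinv * (Mc * Z)" by (rule assoc_mult_mat[OF Zi Mc Z])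
    also have "\<dots> = Zinv * (Z * S)" unfolding McZ ..
    also have "\<dots> = (Zinv * Z) * S" by (rule assoc_mult_mat[OF Zi Z S, symmetric])
    also have "\<dots> = S" using ZiZ S by simp
    finally show ?thesis by simp
  qed
  have sim1: "similar_mat D Mc" unfolding similar_mat_def
    by (rule exI[of _ T], rule exI[of _ Ti]) (use D Mc T Ti TTi TiT DTM in \<open>auto simp: similar_mat_wit_def Let_def\<close>)
  have sim2: "similar_mat Mc S" unfolding similar_mat_def
    by (rule exI[of _ Z], rule exI[of _ Zinv]) (use Z Mc S Zi ZZi ZiZ MZ in \<open>auto simp: similar_mat_wit_def Let_def\<close>)
  define as where "as = map (\<lambda>i. S $$ (i,i)) [0..<N]"
  define js where "js = map (\<lambda>a. (1::nat, a)) as"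
  have SJ: "S = jordan_matrix js"
    unfolding js_def jordan_diag as_def using S assms(8) unfolding diagonal_mat_def by (auto intro!: eq_matI)
  have jD: "jordan_nf D js" unfolding jordan_nf_def
    using similar_mat_trans[OF sim1 sim2] SJ by (auto simp: js_def)
  define idx where "idx = eig_idx S mu"
  define k where "k = length idx"
  have idx_def': "idx = filter (\<lambda>j. S $$ (j, j) = mu) [0..<N]" unfolding idx_def eig_idx_def using S by simp
  have kas: "length (filter (\<lambda>a. a = mu) as) = k" unfolding k_def idx_def' as_def by (simp add: filter_map o_def)
  have ordD: "Polynomial.order mu (char_poly D) = k"
    unfolding jordan_nf_order[OF jD] js_def using kas by (simp add: filter_map o_def sl1)
  have dgD: "dim_gen_eigenspace D mu 1 = k"
    unfolding dim_gen_eigenspace[OF jD] js_def using kas by (simp add: filter_map o_def sl1)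
  have cpD: "char_poly D = char_poly U * char_poly Uc" unfolding D_def by (rule cp_block[OF U Uc])
  have nz: "char_poly U \<noteq> 0" "char_poly Uc \<noteq> 0"
    using degree_monic_char_poly[OF U] degree_monic_char_poly[OF Uc] by auto
  have ordsum: "Polynomial.order mu (char_poly U) + Polynomial.order mu (char_poly Uc) = k"
    using ordD unfolding cpD by (subst (asm) order_mult) (use nz in auto)
  have cmD: "char_matrix D mu = four_block_mat (char_matrix U mu) (0\<^sub>m n n) (0\<^sub>m n n) (char_matrix Uc mu)"
    unfolding D_def char_matrix_def using U Uc by (auto intro!: eq_matI)
  have cmU: "char_matrix U mu \<in> carrier_mat n n" using U by simp
  have cmUc: "char_matrix Uc mu \<in> carrier_mat n n" using Uc by simp
  have cmDc: "char_matrix D mu \<in> carrier_mat (n+n) (n+n)" using D unfolding N_def by simp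
  have dgsum: "dim_gen_eigenspace U mu 1 + dim_gen_eigenspace Uc mu 1 = k"
  proof -
    have "dim_gen_eigenspace D mu 1 = kernel.dim (n+n) (char_matrix D mu)"
      unfolding dim_gen_eigenspace_def kernel_dim_def using carrier_matD(2)[OF cmDc] by simp
    also have "\<dots> = kernel.dim n (char_matrix U mu) + kernel.dim n (char_matrix Uc mu)"
      by (rule kernel_four_block_0_mat[OF cmD cmU cmUc])
    also have "kernel.dim n (char_matrix U mu) = dim_gen_eigenspace U mu 1"
      unfolding dim_gen_eigenspace_def kernel_dim_def using carrier_matD(2)[OF cmU] by simp
    also have "kernel.dim n (char_matrix Uc mu) = dim_gen_eigenspace Uc mu 1"
      unfolding dim_gen_eigenspace_def kernel_dim_def using carrier_matD(2)[OF cmUc] by simp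
    finally show ?thesis using dgD by simp
  qed
  have g1: "dim_gen_eigenspace U mu 1 = eig_mult U mu"
    using geo_le_alg[OF U, of mu] geo_le_alg[OF Uc, of mu] ordsum dgsum unfolding eig_mult_def by linarith
  have kerU: "kernel.dim n (U - mu \<cdot>\<^sub>m 1\<^sub>m n) = eig_mult U mu"
  proof -
    have "U - mu \<cdot>\<^sub>m 1\<^sub>m n = char_matrix U mu" unfolding char_matrix_def using U by (auto intro!: eq_matI)
    then show ?thesis using g1 unfolding dim_gen_eigenspace_def kernel_dim_def using carrier_matD(2)[OF cmU] by simp
  qed
  have idx_set: "set idx = {j. j < N \<and> S $$ (j,j) = mu}" unfolding idx_def' by auto
  have idx_dist: "distinct idx" unfolding idx_def' by simp
  have idx_lt: "idx ! l < N" and idx_mu: "S $$ (idx ! l, idx ! l) = mu" if "l < k" for l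
    using nth_mem[of l idx] idx_set that k_def by auto
  define P where "P = mat N k (\<lambda>(j,l). if j = idx ! l then (1::complex) else 0)"
  have P: "P \<in> carrier_mat N k" unfolding P_def by simp
  have Zs: "Zsub Z S mu = Z * P"
  proof (rule eq_matI)
    fix i l assume i: "i < dim_row (Z * P)" and l: "l < dim_col (Z * P)"
    have il: "i < N" "l < k" using i l Z P by auto
    have "(Z * P) $$ (i,l) = (\<Sum>j\<in>{0..<N}. Z $$ (i,j) * (if j = idx ! l then 1 else 0))"
      using il Z P by (simp add: scalar_prod_def P_def)
    also have "\<dots> = (\<Sum>j\<in>{0..<N}. if j = idx ! l then Z $$ (i,j) else 0)"
      by (rule sum.cong) auto
    also have "\<dots> = Z $$ (i, idx ! l)" using idx_lt[OF il(2)] by simp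
    finally show "Zsub Z S mu $$ (i,l) = (Z * P) $$ (i,l)" using il Z
      by (simp add: Zsub_def k_def idx_def)
  qed (use Z P in \<open>auto simp: Zsub_def k_def idx_def\<close>)
  have Zsc: "Zsub Z S mu \<in> carrier_mat N k" using Zs Z P by simp
  have SP: "S * P = mu \<cdot>\<^sub>m P"
  proof (rule eq_matI)
    fix j l assume j: "j < dim_row (mu \<cdot>\<^sub>m P)" and l: "l < dim_col (mu \<cdot>\<^sub>m P)"
    have jl: "j < N" "l < k" using j l P by auto
    have "(S * P) $$ (j,l) = (\<Sum>i\<in>{0..<N}. S $$ (j,i) * (if i = idx ! l then 1 else 0))"
      using jl S P by (simp add: scalar_prod_def P_def)
    also have "\<dots> = (\<Sum>i\<in>{0..<N}. if i = idx ! l then S $$ (j,i) else 0)"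
      by (rule sum.cong) auto
    also have "\<dots> = S $$ (j, idx ! l)" using idx_lt[OF jl(2)] by simp
    also have "\<dots> = mu * (if j = idx ! l then 1 else 0)"
      using assms(8) S jl idx_lt[OF jl(2)] idx_mu[OF jl(2)] unfolding diagonal_mat_def by auto
    finally show "(S * P) $$ (j,l) = (mu \<cdot>\<^sub>m P) $$ (j,l)" using jl by (simp add: P_def)
  qed (use S P in auto)
  have MZs: "Mc * Zsub Z S mu = mu \<cdot>\<^sub>m Zsub Z S mu"
  proof -
    have "Mc * Zsub Z S mu = (Mc * Z) * P" unfolding Zs by (rule assoc_mult_mat[OF Mc Z P, symmetric])
    also have "\<dots> = Z * (S * P)" unfolding McZ by (rule assoc_mult_mat[OF Z S P])
    also have "\<dots> = mu \<cdot>\<^sub>m (Z * P)" unfolding SP by (rule mult_smult_distrib[OF Z P])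
    finally show ?thesis unfolding Zs .
  qed
  define X where "X = Lmat n * Zsub Z S mu"
  have X: "X \<in> carrier_mat n k" unfolding X_def using L Zsc by simp
  have UX: "U * X = mu \<cdot>\<^sub>m X"
  proof -
    have "U * X = (U * Lmat n) * Zsub Z S mu" unfolding X_def by (rule assoc_mult_mat[OF U L Zsc, symmetric])
    also have "\<dots> = Lmat n * (Mc * Zsub Z S mu)" unfolding LM[symmetric] by (rule assoc_mult_mat[OF L Mc Zsc])
    also have "\<dots> = mu \<cdot>\<^sub>m X" unfolding MZs X_def by (rule mult_smult_distrib[OF L Zsc])
    finally show ?thesis .
  qed
  have CS: "vec_space.col_space n X = mat_kernel (U - mu \<cdot>\<^sub>m 1\<^sub>m n)"
  proof
    show "vec_space.col_space n X \<subseteq> mat_kernel (U - mu \<cdot>\<^sub>m 1\<^sub>m n)"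
    proof
      fix y assume "y \<in> vec_space.col_space n X"
      then obtain x where x: "x \<in> carrier_vec k" and y: "y = X *\<^sub>v x"
        unfolding vec_space.col_space_eq[OF X] using X by auto
      have yc: "y \<in> carrier_vec n" using y X x by simp
      have Uy: "U *\<^sub>v y = mu \<cdot>\<^sub>v y"
      proof -
        have "U *\<^sub>v y = (U * X) *\<^sub>v x" unfolding y by (rule assoc_mult_mat_vec[OF U X x, symmetric])
        also have "\<dots> = mu \<cdot>\<^sub>v y" unfolding UX y by (rule smv[OF X x])
        finally show ?thesis .
      qed
      have "(U - mu \<cdot>\<^sub>m 1\<^sub>m n) *\<^sub>v y = 0\<^sub>v n"
        using U yc Uy by (auto simp: minus_mult_distrib_mat_vec smv intro!: eq_vecI)
      then show "y \<in> mat_kernel (U - mu \<cdot>\<^sub>m 1\<^sub>m n)"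
        using yc U by (intro mat_kernelI[of _ n n]) auto
    qed
    show "mat_kernel (U - mu \<cdot>\<^sub>m 1\<^sub>m n) \<subseteq> vec_space.col_space n X"
    proof
      fix y assume "y \<in> mat_kernel (U - mu \<cdot>\<^sub>m 1\<^sub>m n)"
      then have yc: "y \<in> carrier_vec n" and y0: "(U - mu \<cdot>\<^sub>m 1\<^sub>m n) *\<^sub>v y = 0\<^sub>v n"
        unfolding mat_kernel_def using U by auto
      have Uy: "U *\<^sub>v y = mu \<cdot>\<^sub>v y"
      proof (rule eq_vecI)
        fix i assume i: "i < dim_vec (mu \<cdot>\<^sub>v y)"
        have "(U - mu \<cdot>\<^sub>m 1\<^sub>m n) *\<^sub>v y = U *\<^sub>v y - mu \<cdot>\<^sub>v y"
          using U yc by (simp add: minus_mult_distrib_mat_vec smv[OF one_carrier_mat yc])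
        then have eq: "U *\<^sub>v y - mu \<cdot>\<^sub>v y = 0\<^sub>v n" using y0 by simp
        have "(U *\<^sub>v y - mu \<cdot>\<^sub>v y) $ i = 0\<^sub>v n $ i" unfolding eq ..
        then show "(U *\<^sub>v y) $ i = (mu \<cdot>\<^sub>v y) $ i" using i yc U by simp
      qed (use U yc in simp)
      define v where "v = y @\<^sub>v 0\<^sub>v n"
      have vc: "v \<in> carrier_vec N" unfolding v_def N_def using yc by simp
      define z where "z = Ti *\<^sub>v v"
      have zc: "z \<in> carrier_vec N" unfolding z_def using Ti vc by simp
      have Dv: "D *\<^sub>v v = mu \<cdot>\<^sub>v v"
      proof -
        have "D *\<^sub>v v = (U *\<^sub>v y + 0\<^sub>m n n *\<^sub>v 0\<^sub>v n) @\<^sub>v (0\<^sub>m n n *\<^sub>v y + Uc *\<^sub>v 0\<^sub>v n)"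
          unfolding D_def v_def by (rule four_block_mat_mult_vec[OF U _ _ Uc yc]) auto
        also have "\<dots> = mu \<cdot>\<^sub>v v" unfolding v_def Uy using yc Uc
          by (intro eq_vecI) (auto simp: index_append_vec)
        finally show ?thesis .
      qed
      have Mz: "Mc *\<^sub>v z = mu \<cdot>\<^sub>v z"
      proof -
        have Tz: "T *\<^sub>v z = v" unfolding z_def using assoc_mult_mat_vec[OF T Ti vc] TTi vc by simp
        have "Mc *\<^sub>v z = (Ti * D) *\<^sub>v (T *\<^sub>v z)" unfolding McD
          by (rule assoc_mult_mat_vec[OF mult_carrier_mat[OF Ti D] T zc])
        also have "\<dots> = Ti *\<^sub>v (D *\<^sub>v v)" unfolding Tz using Ti D vc by simp
        also have "\<dots> = Ti *\<^sub>v (mu \<cdot>\<^sub>v v)" unfolding Dv ..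
        also have "\<dots> = mu \<cdot>\<^sub>v z" unfolding z_def using Ti vc by (simp add: mult_mat_vec)
        finally show ?thesis .
      qed
      define w where "w = Zinv *\<^sub>v z"
      have wc: "w \<in> carrier_vec N" unfolding w_def using Zi zc by simp
      have Sw: "S *\<^sub>v w = mu \<cdot>\<^sub>v w"
      proof -
        have Zw: "Z *\<^sub>v w = z" unfolding w_def using assoc_mult_mat_vec[OF Z Zi zc] ZZi zc by simp
        have "S *\<^sub>v w = (Zinv * Mc) *\<^sub>v (Z *\<^sub>v w)" unfolding SMc
          by (rule assoc_mult_mat_vec[OF mult_carrier_mat[OF Zi Mc] Z wc])
        also have "\<dots> = Zinv *\<^sub>v (Mc *\<^sub>v z)" unfolding Zw using Zi Mc zc by simp
        also have "\<dots> = Zinv *\<^sub>v (mu \<cdot>\<^sub>v z)" unfolding Mz ..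
        also have "\<dots> = mu \<cdot>\<^sub>v w" unfolding w_def using Zi zc by (simp add: mult_mat_vec)
        finally show ?thesis .
      qed
      have w0: "w $ j = 0" if j: "j < N" "S $$ (j,j) \<noteq> mu" for j
      proof -
        have "(S *\<^sub>v w) $ j = (\<Sum>i\<in>{0..<N}. S $$ (j,i) * w $ i)"
          using S wc j by (simp add: scalar_prod_def)
        also have "\<dots> = (\<Sum>i\<in>{0..<N}. if i = j then S $$ (j,j) * w $ j else 0)"
          using assms(8) S j unfolding diagonal_mat_def by (intro sum.cong) auto
        also have "\<dots> = S $$ (j,j) * w $ j" using j by simp
        finally have "S $$ (j,j) * w $ j = mu * w $ j" using Sw j wc by simp
        then show ?thesis using j(2) by simp
      qed
      define w' where "w' = vec k (\<lambda>l. w $ (idx ! l))"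
      have w'c: "w' \<in> carrier_vec k" unfolding w'_def by simp
      have Pw: "P *\<^sub>v w' = w"
      proof (rule eq_vecI)
        fix j assume "j < dim_vec w"
        then have j: "j < N" using wc by simp
        have "(P *\<^sub>v w') $ j = (\<Sum>l\<in>{0..<k}. (if j = idx ! l then 1 else 0) * w $ (idx ! l))"
          using P j by (simp add: scalar_prod_def P_def w'_def)
        also have "\<dots> = w $ j"
        proof (cases "j \<in> set idx")
          case True
          then obtain l0 where l0: "l0 < k" "idx ! l0 = j" unfolding k_def by (auto simp: in_set_conv_nth)
          have "(\<Sum>l\<in>{0..<k}. (if j = idx ! l then 1 else 0) * w $ (idx ! l))
              = (\<Sum>l\<in>{0..<k}. if l = l0 then w $ j else 0)"
          proof (rule sum.cong)
            fix l assume "l \<in> {0..<k}"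
            then have "l < k" by simp
            then have "(j = idx ! l) = (l = l0)" using l0 idx_dist nth_eq_iff_index_eq[of idx l l0]
              unfolding k_def by auto
            then show "(if j = idx ! l then 1 else 0) * w $ (idx ! l) = (if l = l0 then w $ j else 0)"
              using l0 by auto
          qed simp
          also have "\<dots> = w $ j" using l0 by simp
          finally show ?thesis .
        next
          case False
          then have "S $$ (j,j) \<noteq> mu" using idx_set j by auto
          then have "w $ j = 0" using w0 j by simp
          moreover have "j \<noteq> idx ! l" if "l < k" for l using False nth_mem[of l idx] that k_def by auto
          ultimately show ?thesis by (simp add: sum.neutral)
        qed
        finally show "(P *\<^sub>v w') $ j = w $ j" .
      qed (use P wc in simp)
      have Xw: "X *\<^sub>v w' = y"
      proof -
        have Zw: "Z *\<^sub>v w = z" unfolding w_def using assoc_mult_mat_vec[OF Z Zi zc] ZZi zc by simp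
        have "X *\<^sub>v w' = Lmat n *\<^sub>v ((Z * P) *\<^sub>v w')" unfolding X_def Zs
          by (rule assoc_mult_mat_vec[OF L mult_carrier_mat[OF Z P] w'c])
        also have "\<dots> = Lmat n *\<^sub>v z" unfolding assoc_mult_mat_vec[OF Z P w'c] Pw Zw ..
        also have "\<dots> = (Lmat n * Ti) *\<^sub>v v" unfolding z_def by (rule assoc_mult_mat_vec[OF L Ti vc, symmetric])
        also have "\<dots> = (I *\<^sub>v y + 0\<^sub>m n n *\<^sub>v 0\<^sub>v n) @\<^sub>v (0\<^sub>m 0 n *\<^sub>v y + 0\<^sub>m 0 n *\<^sub>v 0\<^sub>v n)"
          unfolding LTi v_def by (rule four_block_mat_mult_vec[OF I _ _ _ yc]) auto
        also have "\<dots> = y" unfolding I_def using yc by (intro eq_vecI) (auto simp: index_append_vec)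
        finally show ?thesis .
      qed
      show "y \<in> vec_space.col_space n X"
        unfolding vec_space.col_space_eq[OF X] using X yc w'c Xw by auto
    qed
  qed
  have rk: "vec_space.rank n X = eig_mult U mu"
  proof -
    have "U - mu \<cdot>\<^sub>m 1\<^sub>m n \<in> carrier_mat n n" using U by (intro minus_carrier_mat) auto
    from rank_kernel[OF CS this] kerU show ?thesis by simp
  qed
  show ?thesis using CS rk unfolding X_def by simp
qed


end
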